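(* Let $\Gamma\in\mathcal S$ with embedding $\varphi$. If $v_1\ne v_2$ are vertices with $\varphi(v_k)=E_{i_{v_k}}-\sum_{j\in J_{v_k}}E_j$ ($i_{v_k}\notin J_{v_k}$) for $k=1,2$, then $i_{v_1}\ne i_{v_2}$.
   Context: A plumbing tree is a finite tree $\Gamma$ each of whose vertices $v$ carries an integer decoration $d(v)$. $\Gamma$ is minimal if no vertex has decoration $-1$. For $n\ge 1$ let $(\mathbb Z^n,Q_n)$ be the lattice with basis $E_1,\dots,E_n$ and $Q_n(E_i,E_j)=-\delta_{ij}$, and let $K=\sum_{i=1}^n E_i$. A plumbing tree $\Gamma$ on $n$ vertices is a symplectic plumbing tree if there is a map $\varphi$ (an embedding) from its vertex set to $\mathbb Z^n$ such that: for distinct vertices $v_1,v_2$, $Q_n(\varphi(v_1),\varphi(v_2))$ is $1$ if they are adjacent and $0$ otherwise; $Q_n(\varphi(v),\varphi(v))=d(v)$ for every $v$; and $Q_n(\varphi(v),K)+Q_n(\varphi(v),\varphi(v))=-2$ for every $v$. $\mathcal S$ is the set of minimal, connected symplectic plumbing trees. *)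

theory Defs
  imports Main
begin

text \<open>Vectors of the lattice Z^n are modelled as functions nat => int supported
  on the index set {0..<n}; the basis vector E_i corresponds to index i-1.\<close>

definition lat_vec :: "nat \<Rightarrow> (nat \<Rightarrow> int) \<Rightarrow> bool" where
  "lat_vec n x \<longleftrightarrow> (\<forall>j\<ge>n. x j = 0)"

definition Qf :: "nat \<Rightarrow> (nat \<Rightarrow> int) \<Rightarrow> (nat \<Rightarrow> int) \<Rightarrow> int" where
  "Qf n x y = - (\<Sum>i<n. x i * y i)"

definition Ebas :: "nat \<Rightarrow> nat \<Rightarrow> int" where
  "Ebas i = (\<lambda>j. if j = i then 1 else 0)"

definition Kvec :: "nat \<Rightarrow> nat \<Rightarrow> int" where
  "Kvec n = (\<lambda>j. if j < n then 1 else 0)"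

definition is_tree :: "'v set \<Rightarrow> ('v \<Rightarrow> 'v \<Rightarrow> bool) \<Rightarrow> bool" where
  "is_tree V adj \<longleftrightarrow>
     finite V \<and> V \<noteq> {} \<and>
     (\<forall>u v. adj u v \<longrightarrow> u \<in> V \<and> v \<in> V) \<and>
     (\<forall>u v. adj u v \<longrightarrow> adj v u) \<and>
     (\<forall>u. \<not> adj u u) \<and>
     (\<forall>u\<in>V. \<forall>v\<in>V. (u, v) \<in> {(a, b). adj a b}\<^sup>*) \<and>
     \<not> (\<exists>cs. 3 \<le> length cs \<and> distinct cs \<and> set cs \<subseteq> V \<and>
            (\<forall>k. Suc k < length cs \<longrightarrow> adj (cs ! k) (cs ! Suc k)) \<and>
            adj (last cs) (hd cs))"

definition minimal_plumbing :: "'v set \<Rightarrow> ('v \<Rightarrow> int) \<Rightarrow> bool" where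
  "minimal_plumbing V d \<longleftrightarrow> (\<forall>v\<in>V. d v \<noteq> -1)"

definition symplectic_embedding ::
  "'v set \<Rightarrow> ('v \<Rightarrow> 'v \<Rightarrow> bool) \<Rightarrow> ('v \<Rightarrow> int) \<Rightarrow> ('v \<Rightarrow> nat \<Rightarrow> int) \<Rightarrow> bool" where
  "symplectic_embedding V adj d \<phi> \<longleftrightarrow>
     (let n = card V in
       (\<forall>v\<in>V. lat_vec n (\<phi> v)) \<and>
       (\<forall>v1\<in>V. \<forall>v2\<in>V. v1 \<noteq> v2 \<longrightarrow>
           Qf n (\<phi> v1) (\<phi> v2) = (if adj v1 v2 then 1 else 0)) \<and>
       (\<forall>v\<in>V. Qf n (\<phi> v) (\<phi> v) = d v) \<and>
       (\<forall>v\<in>V. Qf n (\<phi> v) (Kvec n) + Qf n (\<phi> v) (\<phi> v) = -2))"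

definition in_S :: "'v set \<Rightarrow> ('v \<Rightarrow> 'v \<Rightarrow> bool) \<Rightarrow> ('v \<Rightarrow> int) \<Rightarrow> bool" where
  "in_S V adj d \<longleftrightarrow> is_tree V adj \<and> minimal_plumbing V d \<and>
     (\<exists>\<phi>. symplectic_embedding V adj d \<phi>)"

end

theory Submission
  imports Defs
begin

lemma sumE: "finite J \<Longrightarrow> (\<Sum>j\<in>J. Ebas j x) = (if x \<in> J then 1 else 0)"
  unfolding Ebas_def by (simp add: sum.delta')

theorem lemma3p6:
  fixes V :: "'v set" and adj :: "'v \<Rightarrow> 'v \<Rightarrow> bool" and d :: "'v \<Rightarrow> int"
    and \<phi> :: "'v \<Rightarrow> nat \<Rightarrow> int"
    and v1 v2 :: 'v and i1 i2 :: nat and J1 J2 :: "nat set"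
  assumes "in_S V adj d"
    and "symplectic_embedding V adj d \<phi>"
    and "v1 \<in> V" and "v2 \<in> V" and "v1 \<noteq> v2"
    and "i1 < card V" and "J1 \<subseteq> {..<card V}" and "i1 \<notin> J1"
    and "i2 < card V" and "J2 \<subseteq> {..<card V}" and "i2 \<notin> J2"
    and "\<phi> v1 = (\<lambda>x. Ebas i1 x - (\<Sum>j\<in>J1. Ebas j x))"
    and "\<phi> v2 = (\<lambda>x. Ebas i2 x - (\<Sum>j\<in>J2. Ebas j x))"
  shows "i1 \<noteq> i2"
proof
  assume eq: "i1 = i2"
  let ?n = "card V"
  have f1: "finite J1" using assms(7) finite_subset by blast
  have f2: "finite J2" using assms(10) finite_subset by blast
  have x: "\<phi> v1 k = (if k = i1 then 1 else 0) - (if k \<in> J1 then 1 else 0)" for k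
    using assms(12) f1 by (simp add: sumE Ebas_def)
  have y: "\<phi> v2 k = (if k = i1 then 1 else 0) - (if k \<in> J2 then 1 else 0)" for k
    using assms(13) f2 eq by (simp add: sumE Ebas_def)
  have nn: "\<phi> v1 k * \<phi> v2 k \<ge> 0" for k
    using x y assms(8) assms(11) eq by auto
  have "(\<Sum>k\<in>{i1}. \<phi> v1 k * \<phi> v2 k) \<le> (\<Sum>k<?n. \<phi> v1 k * \<phi> v2 k)"
    by (rule sum_mono2) (use assms(6) nn in auto)
  moreover have "(\<Sum>k\<in>{i1}. \<phi> v1 k * \<phi> v2 k) = 1" using x y assms(8) assms(11) eq by simp
  ultimately have "Qf ?n (\<phi> v1) (\<phi> v2) \<le> -1" unfolding Qf_def by simp
  moreover have "Qf ?n (\<phi> v1) (\<phi> v2) = (if adj v1 v2 then 1 else 0)"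
    using assms(2-5) unfolding symplectic_embedding_def Let_def by blast
  ultimately show False by (simp split: if_splits)
qed

end
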